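(* Let $P\in\mathfrak N_2$ and let $r:P\to R$ be a retraction onto a 4-crown stack $R$. If there are level indices $\ell$ of $R$ and $k$ of $P$ with $R(\ell)\subseteq P(k)$, then at least one of the following exists: (a) a retractive up-split $(\max\{k-1,0\},U,s,t)$ of $P$ with $S(h_S)<T(0)$ and such that for every $u\in U$ there is $v\in T(0)$ with $u\not<p$ for all $p\in t^{-1}(v)$; (b) a retractive down-split $(\min\{k+1,h_P\},D,s,t)$ of $P$ with $T(h_T)<S(0)$ and such that for every $d\in D$ there is $v\in T(h_T)$ with $p\not<d$ for all $p\in t^{-1}(v)$.
   Context: All posets are finite; $h_P$ is the height; level sets $P(0)=\min P$, $P(k+1)=\min(P\setminus\bigcup_{i\le k}P(i))$; $P(k\to\ell)=\bigcup_{i=k}^\ell P(i)$ as induced subposet; level sets of $R,S,T$ refer to their own levels. $A<B$ means $a<b$ for all $a\in A,b\in B$. A retraction is an idempotent order-preserving self-map; its image is a retract. A 4-crown stack is an ordinal sum of at least two 2-element antichains. A section of width three is a poset $P$ of height $h_P\ge1$ with carrier $\{c_{k,j}:k\in[0,h_P],j\in\{0,1,2\}\}$ such that: $c_{0,j}<\dots<c_{h_P,j}$ for each $j$; each $\{c_{k,0},c_{k,1},c_{k,2}\}$ is an antichain; $c_{k,i}<c_{\ell,j}\Rightarrow c_{k,i+1}<c_{\ell,j+1}$ (indices mod 3); and for no $k$ is $P(k)<P(k+1)$. It is nice if for all $x<y$: $\{z:z>x\}\not\subseteq\{z:z\ge y\}$ and $\{z:z<y\}\not\subseteq\{z:z\le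 x\}$. $\mathfrak N_2$ is the class of nice sections of width three of height $\ge2$ with horizon 2, i.e. $P(k)<P(\ell)$ whenever $\ell\ge k+2$. For $P\in\mathfrak N_2$, a retractive up-split is a quadruple $(k,U,s,t)$ with $k\in[0,h_P-1]$, $U\subset P(0\to k)$, $s:P(0\to k)\setminus U\to S$ a retraction and $t:P(k+1\to h_P)\to T$ a retraction; a retractive down-split is $(k,D,s,t)$ with $k\in[1,h_P]$, $D\subset P(k\to h_P)$, $s:P(k\to h_P)\setminus D\to S$ and $t:P(0\to k-1)\to T$ retractions; in both cases $S$ and $T$ are each a 2-element antichain or a 4-crown stack. *)

theory Defs
  imports Main
begin

text \<open>Induced subposets are obtained by restricting the carrier and keeping le.\<close>

definition partial_order_on' :: "'a set \<Rightarrow> ('a \<Rightarrow> 'a \<Rightarrow> bool) \<Rightarrow> bool" where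
  "partial_order_on' X le \<longleftrightarrow>
     (\<forall>x\<in>X. le x x) \<and>
     (\<forall>x\<in>X. \<forall>y\<in>X. le x y \<and> le y x \<longrightarrow> x = y) \<and>
     (\<forall>x\<in>X. \<forall>y\<in>X. \<forall>z\<in>X. le x y \<and> le y z \<longrightarrow> le x z)"

definition lt :: "('a \<Rightarrow> 'a \<Rightarrow> bool) \<Rightarrow> 'a \<Rightarrow> 'a \<Rightarrow> bool" where
  "lt le x y \<longleftrightarrow> le x y \<and> x \<noteq> y"

definition set_less :: "('a \<Rightarrow> 'a \<Rightarrow> bool) \<Rightarrow> 'a set \<Rightarrow> 'a set \<Rightarrow> bool" where
  "set_less le A B \<longleftrightarrow> (\<forall>a\<in>A. \<forall>b\<in>B. lt le a b)"

definition chain_in :: "('a \<Rightarrow> 'a \<Rightarrow> bool) \<Rightarrow> 'a set \<Rightarrow> bool" where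
  "chain_in le C \<longleftrightarrow> (\<forall>x\<in>C. \<forall>y\<in>C. le x y \<or> le y x)"

definition antichain_in :: "('a \<Rightarrow> 'a \<Rightarrow> bool) \<Rightarrow> 'a set \<Rightarrow> bool" where
  "antichain_in le A \<longleftrightarrow> (\<forall>x\<in>A. \<forall>y\<in>A. le x y \<longrightarrow> x = y)"

definition height :: "'a set \<Rightarrow> ('a \<Rightarrow> 'a \<Rightarrow> bool) \<Rightarrow> nat" where
  "height X le = Max {card C | C. C \<subseteq> X \<and> chain_in le C} - 1"

definition minimals :: "'a set \<Rightarrow> ('a \<Rightarrow> 'a \<Rightarrow> bool) \<Rightarrow> 'a set" where
  "minimals S le = {x \<in> S. \<not> (\<exists>y\<in>S. lt le y x)}"

text \<open>rest X le k = X minus the union of the levels 0..k-1.\<close>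
primrec rest :: "'a set \<Rightarrow> ('a \<Rightarrow> 'a \<Rightarrow> bool) \<Rightarrow> nat \<Rightarrow> 'a set" where
  "rest X le 0 = X"
| "rest X le (Suc k) = rest X le k - minimals (rest X le k) le"

definition level :: "'a set \<Rightarrow> ('a \<Rightarrow> 'a \<Rightarrow> bool) \<Rightarrow> nat \<Rightarrow> 'a set" where
  "level X le k = minimals (rest X le k) le"

definition levels :: "'a set \<Rightarrow> ('a \<Rightarrow> 'a \<Rightarrow> bool) \<Rightarrow> nat \<Rightarrow> nat \<Rightarrow> 'a set" where
  "levels X le k l = (\<Union>i\<in>{k..l}. level X le i)"

definition retraction_on :: "'a set \<Rightarrow> ('a \<Rightarrow> 'a \<Rightarrow> bool) \<Rightarrow> ('a \<Rightarrow> 'a) \<Rightarrow> bool" where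
  "retraction_on A le r \<longleftrightarrow>
     (\<forall>x\<in>A. r x \<in> A) \<and>
     (\<forall>x\<in>A. \<forall>y\<in>A. le x y \<longrightarrow> le (r x) (r y)) \<and>
     (\<forall>x\<in>A. r (r x) = r x)"

definition two_antichain :: "'a set \<Rightarrow> ('a \<Rightarrow> 'a \<Rightarrow> bool) \<Rightarrow> bool" where
  "two_antichain S le \<longleftrightarrow> card S = 2 \<and> antichain_in le S"

text \<open>4-crown stack: ordinal sum of at least two 2-element antichains.\<close>
definition crown_stack :: "'a set \<Rightarrow> ('a \<Rightarrow> 'a \<Rightarrow> bool) \<Rightarrow> bool" where
  "crown_stack S le \<longleftrightarrow>
     (\<exists>n::nat. \<exists>A::nat \<Rightarrow> 'a set. n \<ge> 2 \<and>
        (\<forall>i<n. two_antichain (A i) le) \<and>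
        S = (\<Union>i<n. A i) \<and>
        (\<forall>i<n. \<forall>j<n. i < j \<longrightarrow> set_less le (A i) (A j)))"

text \<open>Section of width three, with carrier indexed by c k j, k in [0,h_P], j in {0,1,2}.\<close>
definition section3 :: "'a set \<Rightarrow> ('a \<Rightarrow> 'a \<Rightarrow> bool) \<Rightarrow> (nat \<Rightarrow> nat \<Rightarrow> 'a) \<Rightarrow> bool" where
  "section3 X le c \<longleftrightarrow>
     (let h = height X le in
       h \<ge> 1 \<and>
       inj_on (\<lambda>(k, j). c k j) ({0..h} \<times> {0..<3}) \<and>
       X = (\<lambda>(k, j). c k j) ` ({0..h} \<times> {0..<3}) \<and>
       (\<forall>j<3. \<forall>k<h. lt le (c k j) (c (Suc k) j)) \<and>
       (\<forall>k\<le>h. antichain_in le {c k 0, c k 1, c k 2}) \<and>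
       (\<forall>k\<le>h. \<forall>l\<le>h. \<forall>i<3. \<forall>j<3.
          lt le (c k i) (c l j) \<longrightarrow> lt le (c k ((i + 1) mod 3)) (c l ((j + 1) mod 3))) \<and>
       (\<forall>k<h. \<not> set_less le (level X le k) (level X le (Suc k))))"

definition nice :: "'a set \<Rightarrow> ('a \<Rightarrow> 'a \<Rightarrow> bool) \<Rightarrow> bool" where
  "nice X le \<longleftrightarrow>
     (\<forall>x\<in>X. \<forall>y\<in>X. lt le x y \<longrightarrow>
        \<not> ({z\<in>X. lt le x z} \<subseteq> {z\<in>X. le y z}) \<and>
        \<not> ({z\<in>X. lt le z y} \<subseteq> {z\<in>X. le z x}))"

definition N2 :: "'a set \<Rightarrow> ('a \<Rightarrow> 'a \<Rightarrow> bool) \<Rightarrow> bool" where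
  "N2 X le \<longleftrightarrow>
     finite X \<and> partial_order_on' X le \<and>
     (\<exists>c. section3 X le c) \<and> nice X le \<and> height X le \<ge> 2 \<and>
     (\<forall>k l. l \<ge> k + 2 \<longrightarrow> set_less le (level X le k) (level X le l))"

definition split_piece :: "'a set \<Rightarrow> ('a \<Rightarrow> 'a \<Rightarrow> bool) \<Rightarrow> bool" where
  "split_piece S le \<longleftrightarrow> two_antichain S le \<or> crown_stack S le"

definition up_split ::
  "'a set \<Rightarrow> ('a \<Rightarrow> 'a \<Rightarrow> bool) \<Rightarrow> nat \<Rightarrow> 'a set \<Rightarrow> ('a \<Rightarrow> 'a) \<Rightarrow> 'a set \<Rightarrow> ('a \<Rightarrow> 'a) \<Rightarrow> 'a set \<Rightarrow> bool" where
  "up_split X le k U s S t T \<longleftrightarrow>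
     (let h = height X le in
       k \<le> h - 1 \<and>
       U \<subseteq> levels X le 0 k \<and>
       retraction_on (levels X le 0 k - U) le s \<and> S = s ` (levels X le 0 k - U) \<and>
       retraction_on (levels X le (k + 1) h) le t \<and> T = t ` (levels X le (k + 1) h) \<and>
       split_piece S le \<and> split_piece T le)"

definition down_split ::
  "'a set \<Rightarrow> ('a \<Rightarrow> 'a \<Rightarrow> bool) \<Rightarrow> nat \<Rightarrow> 'a set \<Rightarrow> ('a \<Rightarrow> 'a) \<Rightarrow> 'a set \<Rightarrow> ('a \<Rightarrow> 'a) \<Rightarrow> 'a set \<Rightarrow> bool" where
  "down_split X le k D s S t T \<longleftrightarrow>
     (let h = height X le in
       1 \<le> k \<and> k \<le> h \<and>
       D \<subseteq> levels X le k h \<and>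
       retraction_on (levels X le k h - D) le s \<and> S = s ` (levels X le k h - D) \<and>
       retraction_on (levels X le 0 (k - 1)) le t \<and> T = t ` (levels X le 0 (k - 1)) \<and>
       split_piece S le \<and> split_piece T le)"

end

theory Submission
  imports Defs
begin



locale stk =
  fixes X :: "'a set" and le :: "'a \<Rightarrow> 'a \<Rightarrow> bool" and A :: "nat \<Rightarrow> 'a set" and n :: nat
  assumes po: "partial_order_on' X le"
  and AX: "\<And>i. i<n \<Longrightarrow> A i \<subseteq> X"
  and anti: "\<And>i. i<n \<Longrightarrow> two_antichain (A i) le"
  and sl: "\<And>i j. i<n \<Longrightarrow> j<n \<Longrightarrow> i<j \<Longrightarrow> set_less le (A i) (A j)"
begin

lemma refl: "x \<in> X \<Longrightarrow> le x x" using po unfolding partial_order_on'_def by blast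
lemma asym: "x \<in> X \<Longrightarrow> y \<in> X \<Longrightarrow> le x y \<Longrightarrow> le y x \<Longrightarrow> x = y"
  using po unfolding partial_order_on'_def by blast

lemma A_two: "i<n \<Longrightarrow> \<exists>x y. x \<noteq> y \<and> A i = {x,y}"
  using anti[of i] unfolding two_antichain_def by (auto simp: card_2_iff)

lemma A_ne: "i<n \<Longrightarrow> \<exists>x. x \<in> A i" using A_two by blast

lemma A_anti: "i<n \<Longrightarrow> x \<in> A i \<Longrightarrow> y \<in> A i \<Longrightarrow> le x y \<Longrightarrow> x = y"
  using anti[of i] unfolding two_antichain_def antichain_in_def by blast

lemma slt: "i<n \<Longrightarrow> j<n \<Longrightarrow> i<j \<Longrightarrow> x \<in> A i \<Longrightarrow> y \<in> A j \<Longrightarrow> lt le x y"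
  using sl unfolding set_less_def by blast

lemma idx_le: assumes "i<n" "j<n" "x \<in> A i" "y \<in> A j" "le x y" shows "i \<le> j"
proof (rule ccontr)
  assume "\<not> i \<le> j"
  then have "lt le y x" using slt[of j i y x] assms by simp
  then show False using asym[of x y] assms AX unfolding lt_def by blast
qed

lemma idx_lt: assumes "i<n" "j<n" "x \<in> A i" "y \<in> A j" "lt le x y" shows "i < j"
proof -
  have "i \<le> j" using idx_le assms unfolding lt_def by blast
  moreover have "i \<noteq> j" using A_anti assms unfolding lt_def by blast
  ultimately show ?thesis by simp
qed

lemma idx_eq: "i<n \<Longrightarrow> j<n \<Longrightarrow> x \<in> A i \<Longrightarrow> x \<in> A j \<Longrightarrow> i = j"
  using idx_le refl AX by (meson le_antisym subsetD)

definition U :: "nat \<Rightarrow> nat \<Rightarrow> 'a set" where "U p q = (\<Union>i\<in>{p..<q}. A i)"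

lemma min_U: assumes "p < q" "q \<le> n" shows "minimals (U p q) le = A p"
proof
  show "minimals (U p q) le \<subseteq> A p"
  proof
    fix x assume x: "x \<in> minimals (U p q) le"
    then obtain i where i: "i \<in> {p..<q}" "x \<in> A i" unfolding minimals_def U_def by auto
    show "x \<in> A p"
    proof (cases "i = p")
      case False
      obtain y where y: "y \<in> A p" using A_ne assms by force
      have "lt le y x" using slt[of p i y x] i y False assms by auto
      moreover have "y \<in> U p q" using y assms unfolding U_def by auto
      ultimately show ?thesis using x unfolding minimals_def by blast
    qed (use i in auto)
  qed
  show "A p \<subseteq> minimals (U p q) le"
  proof
    fix x assume x: "x \<in> A p"
    have "\<not> lt le y x" if "y \<in> U p q" for y
    proof
      assume "lt le y x"
      from that obtain j where "j \<in> {p..<q}" "y \<in> A j" unfolding U_def by auto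
      then show False using idx_lt[of j p y x] \<open>lt le y x\<close> x assms by auto
    qed
    then show "x \<in> minimals (U p q) le" using x assms unfolding minimals_def U_def by auto
  qed
qed

lemma rest_U: assumes "q \<le> n" shows "rest (U p q) le j = U (p+j) q"
proof (induction j)
  case 0 then show ?case by simp
next
  case (Suc j)
  show ?case
  proof (cases "p + j < q")
    case True
    have "rest (U p q) le (Suc j) = U (p+j) q - A (p+j)"
      using Suc min_U[OF True assms] by (simp add: level_def)
    also have "\<dots> = U (p + Suc j) q"
    proof
      show "U (p + j) q - A (p + j) \<subseteq> U (p + Suc j) q"
        unfolding U_def by auto (metis Suc_leI atLeastLessThan_iff le_neq_implies_less)
      show "U (p + Suc j) q \<subseteq> U (p + j) q - A (p + j)"
      proof
        fix x assume "x \<in> U (p + Suc j) q"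
        then obtain i where i: "p + Suc j \<le> i" "i < q" "x \<in> A i" unfolding U_def by auto
        have "x \<notin> A (p+j)"
        proof
          assume "x \<in> A (p+j)"
          then have "i = p + j" using idx_eq[of i "p+j" x] i assms by simp
          then show False using i by simp
        qed
        moreover have "x \<in> U (p + j) q" using i unfolding U_def by auto
        ultimately show "x \<in> U (p + j) q - A (p + j)" by blast
      qed
    qed
    finally show ?thesis .
  next
    case False
    then have "U (p+j) q = {}" "U (p + Suc j) q = {}" unfolding U_def by auto
    then show ?thesis using Suc by (simp add: minimals_def)
  qed
qed

lemma level_U: "q \<le> n \<Longrightarrow> p + j < q \<Longrightarrow> level (U p q) le j = A (p+j)"
  unfolding level_def using rest_U min_U by simp

lemma U_sub: "q \<le> n \<Longrightarrow> U p q \<subseteq> X" by (auto simp: U_def) (meson AX less_le_trans subsetD)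

lemma chain_card: assumes "q \<le> n" "C \<subseteq> U p q" "chain_in le C" shows "card C \<le> q - p"
proof -
  have ex: "\<exists>i. i \<in> {p..<q} \<and> x \<in> A i" if "x \<in> C" for x
    using that assms(2) unfolding U_def by blast
  define f where "f x = (SOME i. i \<in> {p..<q} \<and> x \<in> A i)" for x
  have f: "f x \<in> {p..<q} \<and> x \<in> A (f x)" if "x \<in> C" for x
    unfolding f_def by (rule someI_ex[OF ex[OF that]])
  have "inj_on f C"
  proof
    fix x y assume xy: "x \<in> C" "y \<in> C" "f x = f y"
    have fx: "f x < n" using f[OF xy(1)] assms(1) by simp
    have "x \<in> A (f x)" using f[OF xy(1)] by simp
    moreover have "y \<in> A (f x)" using f[OF xy(2)] xy(3) by simp
    moreover have "le x y \<or> le y x" using assms(3) xy unfolding chain_in_def by blast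
    ultimately show "x = y" using A_anti[OF fx] by blast
  qed
  moreover have "f ` C \<subseteq> {p..<q}" using f by auto
  ultimately have "card C \<le> card {p..<q}" by (intro card_inj_on_le) auto
  then show ?thesis by simp
qed

lemma height_U: assumes "p < q" "q \<le> n" shows "height (U p q) le = q - p - 1"
proof -
  let ?M = "{card C | C. C \<subseteq> U p q \<and> chain_in le C}"
  define g where "g i = (SOME x. x \<in> A i)" for i
  have g: "g i \<in> A i" if "i < n" for i
    unfolding g_def using A_ne[OF that] by (rule someI_ex)
  have gX: "g i \<in> X" if "i<n" for i using g AX that by blast
  have chain: "chain_in le (g ` {p..<q})"
    unfolding chain_in_def
  proof (intro ballI)
    fix x y assume "x \<in> g ` {p..<q}" "y \<in> g ` {p..<q}"
    then obtain i j where ij: "i \<in> {p..<q}" "j \<in> {p..<q}" "x = g i" "y = g j" by blast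
    have i: "i < n" and j: "j < n" using ij assms by auto
    consider "i < j" | "i = j" | "j < i" by arith
    then show "le x y \<or> le y x"
    proof cases
      case 1 then show ?thesis using slt[OF i j 1 g[OF i] g[OF j]] ij unfolding lt_def by auto
    next
      case 2 then show ?thesis using refl[OF gX[OF i]] ij by auto
    next
      case 3 then show ?thesis using slt[OF j i 3 g[OF j] g[OF i]] ij unfolding lt_def by auto
    qed
  qed
  have inj: "inj_on g {p..<q}"
  proof
    fix i j assume ij: "i \<in> {p..<q}" "j \<in> {p..<q}" "g i = g j"
    have i: "i < n" and j: "j < n" using ij assms by auto
    have "g i \<in> A j" using g[OF j] ij by simp
    then show "i = j" using idx_eq[OF i j g[OF i]] by simp
  qed
  have sub: "g ` {p..<q} \<subseteq> U p q" using g assms unfolding U_def by auto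
  have cardg: "card (g ` {p..<q}) = q - p" using inj by (simp add: card_image)
  have mem: "q - p \<in> ?M" using cardg sub chain by (metis (mono_tags, lifting) mem_Collect_eq)
  have up: "y \<le> q - p" if "y \<in> ?M" for y
  proof -
    from that obtain C where "y = card C" "C \<subseteq> U p q" "chain_in le C" by blast
    then show ?thesis using chain_card[OF assms(2)] by simp
  qed
  have fin: "finite ?M"
  proof (rule finite_subset[of _ "{0..q-p}"])
    show "?M \<subseteq> {0..q-p}"
    proof
      fix y assume "y \<in> ?M"
      from up[OF this] show "y \<in> {0..q-p}" by simp
    qed
  qed simp
  have "Max ?M = q - p" by (rule Max_eqI[OF fin up mem])
  then show ?thesis unfolding height_def by simp
qed

lemma split_U: assumes "p < q" "q \<le> n" shows "split_piece (U p q) le"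
proof (cases "q = Suc p")
  case True
  then have "U p q = A p" unfolding U_def by auto
  then show ?thesis using anti assms unfolding split_piece_def by auto
next
  case False
  have "crown_stack (U p q) le"
    unfolding crown_stack_def
  proof (intro exI conjI allI impI)
    show "2 \<le> q - p" using False assms by arith
    show "two_antichain (A (p+i)) le" if "i < q - p" for i using anti that assms by auto
    have "U p q \<subseteq> (\<Union>i<q - p. A (p + i))"
    proof
      fix x assume "x \<in> U p q"
      then obtain i where "p \<le> i" "i < q" "x \<in> A i" unfolding U_def by auto
      then show "x \<in> (\<Union>i<q - p. A (p + i))" by (intro UN_I[of "i - p"]) auto
    qed
    moreover have "(\<Union>i<q - p. A (p + i)) \<subseteq> U p q" unfolding U_def by force
    ultimately show "U p q = (\<Union>i<q - p. A (p + i))" by blast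
    show "set_less le (A (p + i)) (A (p + j))" if "i < q - p" "j < q - p" "i < j" for i j
      using sl that assms by auto
  qed
  then show ?thesis unfolding split_piece_def by auto
qed

end



locale sec =
  fixes X :: "'a set" and le :: "'a \<Rightarrow> 'a \<Rightarrow> bool" and c :: "nat \<Rightarrow> nat \<Rightarrow> 'a" and h :: nat
  assumes po: "partial_order_on' X le"
  and sec3: "section3 X le c"
  and hdef: "h = height X le"
  and hor: "\<And>k l. l \<ge> k + 2 \<Longrightarrow> set_less le (level X le k) (level X le l)"
  and nic: "nice X le"
begin

lemma refl: "x \<in> X \<Longrightarrow> le x x" using po unfolding partial_order_on'_def by blast
lemma asym: "x \<in> X \<Longrightarrow> y \<in> X \<Longrightarrow> le x y \<Longrightarrow> le y x \<Longrightarrow> x = y"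
  using po unfolding partial_order_on'_def by blast
lemma trans: "x \<in> X \<Longrightarrow> y \<in> X \<Longrightarrow> z \<in> X \<Longrightarrow> le x y \<Longrightarrow> le y z \<Longrightarrow> le x z"
  using po unfolding partial_order_on'_def by blast

lemma S0: "h \<ge> 1 \<and>
       inj_on (\<lambda>(k, j). c k j) ({0..h} \<times> {0..<3}) \<and>
       X = (\<lambda>(k, j). c k j) ` ({0..h} \<times> {0..<3}) \<and>
       (\<forall>j<3. \<forall>k<h. lt le (c k j) (c (Suc k) j)) \<and>
       (\<forall>k\<le>h. antichain_in le {c k 0, c k 1, c k 2}) \<and>
       (\<forall>k\<le>h. \<forall>l\<le>h. \<forall>i<3. \<forall>j<3.
          lt le (c k i) (c l j) \<longrightarrow> lt le (c k ((i + 1) mod 3)) (c l ((j + 1) mod 3))) \<and>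
       (\<forall>k<h. \<not> set_less le (level X le k) (level X le (Suc k)))"
proof -
  have "let h = height X le in h \<ge> 1 \<and>
       inj_on (\<lambda>(k, j). c k j) ({0..h} \<times> {0..<3}) \<and>
       X = (\<lambda>(k, j). c k j) ` ({0..h} \<times> {0..<3}) \<and>
       (\<forall>j<3. \<forall>k<h. lt le (c k j) (c (Suc k) j)) \<and>
       (\<forall>k\<le>h. antichain_in le {c k 0, c k 1, c k 2}) \<and>
       (\<forall>k\<le>h. \<forall>l\<le>h. \<forall>i<3. \<forall>j<3.
          lt le (c k i) (c l j) \<longrightarrow> lt le (c k ((i + 1) mod 3)) (c l ((j + 1) mod 3))) \<and>
       (\<forall>k<h. \<not> set_less le (level X le k) (level X le (Suc k)))"
    using sec3 unfolding section3_def .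
  then show ?thesis unfolding Let_def hdef[symmetric] .
qed

lemma S1: "h \<ge> 1" using S0 by (rule conjunct1)
lemma S2: "inj_on (\<lambda>(k, j). c k j) ({0..h} \<times> {0..<3})" using S0 by (elim conjE)
lemma S3: "X = (\<lambda>(k, j). c k j) ` ({0..h} \<times> {0..<3})" using S0 by (elim conjE)
lemma S4: "j<3 \<Longrightarrow> k<h \<Longrightarrow> lt le (c k j) (c (Suc k) j)"
proof -
  have "\<forall>j<3. \<forall>k<h. lt le (c k j) (c (Suc k) j)" using S0 by (elim conjE)
  then show "j<3 \<Longrightarrow> k<h \<Longrightarrow> lt le (c k j) (c (Suc k) j)" by blast
qed
lemma S5: "k\<le>h \<Longrightarrow> antichain_in le {c k 0, c k 1, c k 2}"
proof -
  have "\<forall>k\<le>h. antichain_in le {c k 0, c k 1, c k 2}" using S0 by (elim conjE)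
  then show "k\<le>h \<Longrightarrow> antichain_in le {c k 0, c k 1, c k 2}" by blast
qed
lemma S6: "k\<le>h \<Longrightarrow> l\<le>h \<Longrightarrow> i<3 \<Longrightarrow> j<3 \<Longrightarrow>
          lt le (c k i) (c l j) \<Longrightarrow> lt le (c k ((i + 1) mod 3)) (c l ((j + 1) mod 3))"
proof -
  have "\<forall>k\<le>h. \<forall>l\<le>h. \<forall>i<3. \<forall>j<3.
          lt le (c k i) (c l j) \<longrightarrow> lt le (c k ((i + 1) mod 3)) (c l ((j + 1) mod 3))" using S0 by (elim conjE)
  then show "k\<le>h \<Longrightarrow> l\<le>h \<Longrightarrow> i<3 \<Longrightarrow> j<3 \<Longrightarrow>
          lt le (c k i) (c l j) \<Longrightarrow> lt le (c k ((i + 1) mod 3)) (c l ((j + 1) mod 3))" by blast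
qed
lemma S7: "k<h \<Longrightarrow> \<not> set_less le (level X le k) (level X le (Suc k))"
proof -
  have "\<forall>k<h. \<not> set_less le (level X le k) (level X le (Suc k))" using S0 by (elim conjE)
  then show "k<h \<Longrightarrow> \<not> set_less le (level X le k) (level X le (Suc k))" by blast
qed

lemma cX: "k \<le> h \<Longrightarrow> j < 3 \<Longrightarrow> c k j \<in> X" using S3 by auto

lemma c_inj: "k \<le> h \<Longrightarrow> j < 3 \<Longrightarrow> k' \<le> h \<Longrightarrow> j' < 3 \<Longrightarrow> c k j = c k' j' \<Longrightarrow> k = k' \<and> j = j'"
  using S2 unfolding inj_on_def by auto

lemma chain_le: "k \<le> i \<Longrightarrow> i \<le> h \<Longrightarrow> j < 3 \<Longrightarrow> le (c k j) (c i j)"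
proof (induction i)
  case 0 then show ?case using refl cX by simp
next
  case (Suc i)
  show ?case
  proof (cases "k = Suc i")
    case True then show ?thesis using refl cX Suc by simp
  next
    case False
    then have "le (c k j) (c i j)" using Suc by simp
    moreover have "le (c i j) (c (Suc i) j)" using S4[of j i] Suc unfolding lt_def by simp
    ultimately show ?thesis using trans[of "c k j" "c i j" "c (Suc i) j"] cX Suc False by simp
  qed
qed

lemma row_anti: "k \<le> h \<Longrightarrow> j < 3 \<Longrightarrow> j' < 3 \<Longrightarrow> le (c k j) (c k j') \<Longrightarrow> j = j'"
proof -
  assume a: "k \<le> h" "j < 3" "j' < 3" "le (c k j) (c k j')"
  have m: "c k x \<in> {c k 0, c k 1, c k 2}" if "x < 3" for x
  proof -
    have "x = 0 \<or> x = 1 \<or> x = 2" using that by auto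
    then show ?thesis by auto
  qed
  have "c k j = c k j'" using S5[OF a(1)] m[OF a(2)] m[OF a(3)] a(4) unfolding antichain_in_def by blast
  then show "j = j'" using c_inj a by blast
qed

lemma lt_row: assumes "k \<le> h" "i \<le> h" "j < 3" "j' < 3" "lt le (c k j) (c i j')" shows "k < i"
proof (rule ccontr)
  assume "\<not> k < i"
  then have ik: "i \<le> k" by simp
  have l1: "le (c i j') (c k j')" using chain_le[OF ik assms(1) assms(4)] .
  have "le (c k j) (c k j')" using trans[of "c k j" "c i j'" "c k j'"] l1 assms cX unfolding lt_def by blast
  then have jj: "j = j'" using row_anti assms by blast
  have "c k j = c i j'" using asym[of "c k j" "c i j'"] l1 assms cX jj unfolding lt_def by blast
  then show False using assms unfolding lt_def by simp
qed

definition row :: "nat \<Rightarrow> 'a set" where "row k = {c k j | j. j < 3}"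

lemma rest_eq: "rest X le k = {c i j | i j. k \<le> i \<and> i \<le> h \<and> j < 3}"
proof (induction k)
  case 0 then show ?case using S3 by (auto; blast)
next
  case (Suc k)
  show ?case
  proof (cases "k \<le> h")
    case False
    then have "rest X le k = {}" using Suc by auto
    then show ?thesis using False by (auto simp: minimals_def)
  next
    case True
    have mins: "minimals (rest X le k) le = row k"
    proof
      show "minimals (rest X le k) le \<subseteq> row k"
      proof
        fix x assume x: "x \<in> minimals (rest X le k) le"
        then obtain i j where ij: "x = c i j" "k \<le> i" "i \<le> h" "j < 3" using Suc unfolding minimals_def by auto
        show "x \<in> row k"
        proof (cases "i = k")
          case True then show ?thesis using ij unfolding row_def by auto
        next
          case False
          then have "lt le (c (i - 1) j) (c i j)" using S4[of j "i-1"] ij by simp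
          moreover have "c (i-1) j \<in> rest X le k"
          proof -
            have "k \<le> i - 1" "i - 1 \<le> h" using ij False by auto
            then show ?thesis using Suc.IH ij(4) by blast
          qed
          ultimately show ?thesis using x ij unfolding minimals_def by blast
        qed
      qed
      show "row k \<subseteq> minimals (rest X le k) le"
      proof
        fix x assume "x \<in> row k"
        then obtain j where j: "x = c k j" "j < 3" unfolding row_def by auto
        have "\<not> lt le y x" if "y \<in> rest X le k" for y
        proof
          assume "lt le y x"
          from that obtain i j' where "y = c i j'" "k \<le> i" "i \<le> h" "j' < 3" using Suc by auto
          then show False using lt_row[of i k j' j] \<open>lt le y x\<close> j True by auto
        qed
        moreover have "x \<in> rest X le k" using Suc j True by auto
        ultimately show "x \<in> minimals (rest X le k) le" unfolding minimals_def by blast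
      qed
    qed
    have "rest X le (Suc k) = rest X le k - row k" using mins by simp
    also have "\<dots> = {c i j | i j. Suc k \<le> i \<and> i \<le> h \<and> j < 3}"
    proof
      show "rest X le k - row k \<subseteq> {c i j | i j. Suc k \<le> i \<and> i \<le> h \<and> j < 3}"
      proof
        fix x assume x: "x \<in> rest X le k - row k"
        then obtain i j where ij: "x = c i j" "k \<le> i" "i \<le> h" "j < 3" using Suc.IH by blast
        have "i \<noteq> k" using x ij unfolding row_def by blast
        then have "Suc k \<le> i" using ij by simp
        then show "x \<in> {c i j | i j. Suc k \<le> i \<and> i \<le> h \<and> j < 3}" using ij by blast
      qed
      show "{c i j | i j. Suc k \<le> i \<and> i \<le> h \<and> j < 3} \<subseteq> rest X le k - row k"
      proof
        fix x assume "x \<in> {c i j | i j. Suc k \<le> i \<and> i \<le> h \<and> j < 3}"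
        then obtain i j where ij: "x = c i j" "Suc k \<le> i" "i \<le> h" "j < 3" by blast
        have "x \<notin> row k"
        proof
          assume "x \<in> row k"
          then obtain j' where "x = c k j'" "j' < 3" unfolding row_def by auto
          then show False using c_inj[of i j k j'] ij True by auto
        qed
        moreover have "k \<le> i" using ij by simp
        then have "x \<in> rest X le k" using Suc.IH ij by blast
        ultimately show "x \<in> rest X le k - row k" by blast
      qed
    qed
    finally show ?thesis .
  qed
qed

lemma level_eq: "k \<le> h \<Longrightarrow> level X le k = {c k 0, c k 1, c k 2}"
  and level_empty: "h < k \<Longrightarrow> level X le k = {}"
proof -
  assume k: "k \<le> h"
  have "level X le k = minimals (rest X le k) le" unfolding level_def ..
  also have "\<dots> = {c k j | j. j < 3}"
  proof
    show "minimals (rest X le k) le \<subseteq> {c k j | j. j < 3}"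
    proof
      fix x assume x: "x \<in> minimals (rest X le k) le"
      then obtain i j where ij: "x = c i j" "k \<le> i" "i \<le> h" "j < 3" using rest_eq unfolding minimals_def by auto
      show "x \<in> {c k j | j. j < 3}"
      proof (cases "i = k")
        case True then show ?thesis using ij by auto
      next
        case False
        then have "lt le (c (i - 1) j) (c i j)" using S4[of j "i-1"] ij by simp
        moreover have "c (i-1) j \<in> rest X le k"
        proof -
          have "k \<le> i - 1" "i - 1 \<le> h" using ij False by auto
          then show ?thesis using rest_eq[of k] ij(4) by blast
        qed
        ultimately show ?thesis using x ij unfolding minimals_def by blast
      qed
    qed
    show "{c k j | j. j < 3} \<subseteq> minimals (rest X le k) le"
    proof
      fix x assume "x \<in> {c k j | j. j < 3}"
      then obtain j where j: "x = c k j" "j < 3" by auto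
      have "\<not> lt le y x" if "y \<in> rest X le k" for y
      proof
        assume "lt le y x"
        from that obtain i j' where "y = c i j'" "k \<le> i" "i \<le> h" "j' < 3" using rest_eq by auto
        then show False using lt_row[of i k j' j] \<open>lt le y x\<close> j k by auto
      qed
      moreover have "x \<in> rest X le k" using rest_eq j k by auto
      ultimately show "x \<in> minimals (rest X le k) le" unfolding minimals_def by blast
    qed
  qed
  also have "\<dots> = {c k 0, c k 1, c k 2}"
  proof
    show "{c k j |j. j < 3} \<subseteq> {c k 0, c k 1, c k 2}"
    proof
      fix x assume "x \<in> {c k j |j. j < 3}"
      then obtain j where "x = c k j" "j < 3" by blast
      moreover have "j = 0 \<or> j = 1 \<or> j = 2" using \<open>j<3\<close> by auto
      ultimately show "x \<in> {c k 0, c k 1, c k 2}" by auto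
    qed
    show "{c k 0, c k 1, c k 2} \<subseteq> {c k j |j. j < 3}" by force
  qed
  finally show "level X le k = {c k 0, c k 1, c k 2}" .
next
  assume "h < k"
  then show "level X le k = {}" unfolding level_def minimals_def using rest_eq by auto
qed


lemma three: "(j::nat) < 3 \<Longrightarrow> j = 0 \<or> j = 1 \<or> j = 2" by auto

lemma L_h: "x \<in> level X le k \<Longrightarrow> k \<le> h" using level_empty by (cases "k \<le> h") auto

lemma L_c: "x \<in> level X le k \<Longrightarrow> \<exists>j<3. x = c k j"
proof -
  assume x: "x \<in> level X le k"
  then have "k \<le> h" using L_h by blast
  then have "x = c k 0 \<or> x = c k 1 \<or> x = c k 2" using x level_eq by auto
  then show ?thesis
  proof (elim disjE)
    assume "x = c k 0" then show ?thesis by (intro exI[of _ 0]) simp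
  next
    assume "x = c k 1" then show ?thesis by (intro exI[of _ 1]) simp
  next
    assume "x = c k 2" then show ?thesis by (intro exI[of _ 2]) simp
  qed
qed

lemma L_sub: "level X le k \<subseteq> X" using L_c cX L_h by blast

lemma L_cover: "x \<in> X \<Longrightarrow> \<exists>i\<le>h. x \<in> level X le i"
proof -
  assume "x \<in> X"
  then obtain i j where "i \<le> h" "j < 3" "x = c i j" using S3 by auto
  moreover then have "x \<in> level X le i" using level_eq three[of j] by auto
  ultimately show ?thesis by blast
qed

lemma L_disj: "x \<in> level X le i \<Longrightarrow> x \<in> level X le j \<Longrightarrow> i = j"
  using L_c L_h c_inj by metis

lemma L_lt: "x \<in> level X le i \<Longrightarrow> y \<in> level X le j \<Longrightarrow> lt le x y \<Longrightarrow> i < j"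
  using L_c L_h lt_row by metis

lemma L_anti: "x \<in> level X le k \<Longrightarrow> y \<in> level X le k \<Longrightarrow> le x y \<Longrightarrow> x = y"
  using L_lt unfolding lt_def by blast

lemma L_le: "x \<in> level X le i \<Longrightarrow> y \<in> level X le j \<Longrightarrow> le x y \<Longrightarrow> i \<le> j"
  using L_lt L_disj unfolding lt_def by (metis le_eq_less_or_eq)

lemma G1: "y \<in> level X le (Suc k) \<Longrightarrow> \<exists>x\<in>level X le k. lt le x y"
proof -
  assume y: "y \<in> level X le (Suc k)"
  then obtain j where j: "j < 3" "y = c (Suc k) j" using L_c by blast
  have k: "k < h" using L_h y by fastforce
  have "c k j \<in> level X le k" using level_eq k three[OF j(1)] by auto
  then show ?thesis using S4[OF j(1) k] j by blast
qed

lemma G1d: "x \<in> level X le k \<Longrightarrow> k < h \<Longrightarrow> \<exists>y\<in>level X le (Suc k). lt le x y"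
proof -
  assume x: "x \<in> level X le k" and k: "k < h"
  then obtain j where j: "j < 3" "x = c k j" using L_c by blast
  have "c (Suc k) j \<in> level X le (Suc k)" using level_eq k three[OF j(1)] by auto
  then show ?thesis using S4[OF j(1) k] j by blast
qed

lemma N0: "y \<in> level X le (Suc 0) \<Longrightarrow> \<exists>x1 x2. x1 \<in> level X le 0 \<and> x2 \<in> level X le 0 \<and> x1 \<noteq> x2 \<and> lt le x1 y \<and> lt le x2 y"
proof -
  assume y: "y \<in> level X le (Suc 0)"
  obtain x where x: "x \<in> level X le 0" "lt le x y" using G1[OF y] by blast
  have xX: "x \<in> X" and yX: "y \<in> X" using x y L_sub by auto
  have "\<not> ({z\<in>X. lt le z y} \<subseteq> {z\<in>X. le z x})" using nic xX yX x unfolding nice_def by blast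
  then obtain z where z: "z \<in> X" "lt le z y" "\<not> le z x" by blast
  obtain i where i: "z \<in> level X le i" using L_cover z by blast
  have "i < Suc 0" using L_lt[OF i y z(2)] .
  then have "z \<in> level X le 0" using i by simp
  moreover have "z \<noteq> x" using z refl xX by auto
  ultimately show ?thesis using x z by blast
qed

lemma Ntop: "x \<in> level X le (h - 1) \<Longrightarrow> \<exists>y1 y2. y1 \<in> level X le h \<and> y2 \<in> level X le h \<and> y1 \<noteq> y2 \<and> lt le x y1 \<and> lt le x y2"
proof -
  assume x: "x \<in> level X le (h - 1)"
  have hh: "Suc (h - 1) = h" using S1 by simp
  obtain y where y: "y \<in> level X le h" "lt le x y" using G1d[OF x] S1 hh by auto
  have xX: "x \<in> X" and yX: "y \<in> X" using x y L_sub by auto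
  have "\<not> ({z\<in>X. lt le x z} \<subseteq> {z\<in>X. le y z})" using nic xX yX y unfolding nice_def by blast
  then obtain z where z: "z \<in> X" "lt le x z" "\<not> le y z" by blast
  obtain i where i: "z \<in> level X le i" using L_cover z by blast
  have "h - 1 < i" using L_lt[OF x i z(2)] .
  moreover have "i \<le> h" using L_h i by blast
  ultimately have "z \<in> level X le h" using i by (metis Suc_leI hh le_antisym)
  moreover have "z \<noteq> y" using z refl yX by auto
  ultimately show ?thesis using y z by blast
qed

lemma card_L: "k \<le> h \<Longrightarrow> card (level X le k) = 3"
proof -
  assume k: "k \<le> h"
  have d: "c k 0 \<noteq> c k 1" "c k 0 \<noteq> c k 2" "c k 1 \<noteq> c k 2"
    using c_inj[of k 0 k 1] c_inj[of k 0 k 2] c_inj[of k 1 k 2] k by auto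
  show ?thesis using level_eq[OF k] d by simp
qed

lemma pigeon: assumes "a1 \<in> level X le k" "a2 \<in> level X le k" "b1 \<in> level X le k" "b2 \<in> level X le k"
  "a1 \<noteq> a2" "b1 \<noteq> b2"
  shows "a1 = b1 \<or> a1 = b2 \<or> a2 = b1 \<or> a2 = b2"
proof (rule ccontr)
  assume n: "\<not> ?thesis"
  have k: "k \<le> h" using assms L_h by blast
  have "card {a1,a2,b1,b2} = 4" using n assms(5,6) by simp
  moreover have "card {a1,a2,b1,b2} \<le> card (level X le k)"
    by (rule card_mono) (use assms level_eq[OF k] in auto)
  ultimately show False using card_L[OF k] by simp
qed

lemma L_three: assumes "a \<in> level X le k" "b \<in> level X le k" "a \<noteq> b"
  shows "\<exists>z. z \<in> level X le k \<and> z \<noteq> a \<and> z \<noteq> b \<and> level X le k = {a,b,z}"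
proof -
  have k: "k \<le> h" using assms L_h by blast
  have fin: "finite (level X le k)" using level_eq[OF k] by simp
  have "card {a,b} = 2" using assms by simp
  have "level X le k - {a,b} \<noteq> {}"
  proof
    assume "level X le k - {a,b} = {}"
    then have "level X le k \<subseteq> {a,b}" by blast
    then have "card (level X le k) \<le> card {a,b}" by (rule card_mono[rotated]) simp
    then show False using card_L[OF k] \<open>card {a,b} = 2\<close> by simp
  qed
  then obtain z where z: "z \<in> level X le k" "z \<noteq> a" "z \<noteq> b" by blast
  have sub: "{a,b,z} \<subseteq> level X le k" using z assms by auto
  have "card {a,b,z} = 3" using z assms by simp
  then have "{a,b,z} = level X le k" using card_subset_eq[OF fin sub] card_L[OF k] by simp
  then show ?thesis using z by blast
qed

end



locale mainl = sec: sec X le c h + st: stk X le A n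
  for X :: "'a set" and le c h A n +
  fixes r :: "'a \<Rightarrow> 'a" and R :: "'a set" and l k :: nat and a b z :: 'a
  assumes ret: "retraction_on X le r" and Rdef: "R = r ` X" and RA: "R = (\<Union>i<n. A i)"
  and n2: "2 \<le> n" and ln: "l < n" and Al: "A l = {a,b}" and ab: "a \<noteq> b"
  and Lk: "level X le k = {a,b,z}" and za: "z \<noteq> a" and zb: "z \<noteq> b" and kh: "k \<le> h"
begin

abbreviation "Rlt \<equiv> st.U 0 l"
abbreviation "Rge \<equiv> st.U l n"
abbreviation "Rle \<equiv> st.U 0 (Suc l)"
abbreviation "Rgt \<equiv> st.U (Suc l) n"

lemma rX: "x \<in> X \<Longrightarrow> r x \<in> R" using Rdef by blast
lemma rXX: "x \<in> X \<Longrightarrow> r x \<in> X" using ret unfolding retraction_on_def by blast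
lemma RX: "R \<subseteq> X" using Rdef rXX by blast
lemma rfix: "y \<in> R \<Longrightarrow> r y = y" using ret Rdef unfolding retraction_on_def by blast
lemma rmono: "x \<in> X \<Longrightarrow> y \<in> X \<Longrightarrow> le x y \<Longrightarrow> le (r x) (r y)"
  using ret unfolding retraction_on_def by blast

lemma aA: "a \<in> A l" "b \<in> A l" using Al by auto
lemma aX: "a \<in> X" "b \<in> X" using aA st.AX ln by auto
lemma aL: "a \<in> level X le k" "b \<in> level X le k" "z \<in> level X le k" using Lk by auto

lemma inU: "i \<in> {p..<q} \<Longrightarrow> x \<in> A i \<Longrightarrow> x \<in> st.U p q" unfolding st.U_def by blast
lemma UE: "x \<in> st.U p q \<Longrightarrow> (\<And>i. p \<le> i \<Longrightarrow> i < q \<Longrightarrow> x \<in> A i \<Longrightarrow> P) \<Longrightarrow> P"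
  unfolding st.U_def by auto

lemma RE: "y \<in> R \<Longrightarrow> (\<And>i. i < n \<Longrightarrow> y \<in> A i \<Longrightarrow> P) \<Longrightarrow> P" using RA by auto
lemma UR: "q \<le> n \<Longrightarrow> st.U p q \<subseteq> R" using RA unfolding st.U_def by auto

lemma URm: "x \<in> st.U p q \<Longrightarrow> q \<le> n \<Longrightarrow> x \<in> R" using UR by blast

lemma aRge: "a \<in> Rge" "b \<in> Rge" "a \<in> Rle" "b \<in> Rle" using aA ln by (auto intro: inU)

lemma Rge_up: assumes "y \<in> R" "w \<in> Rge" "le w y" shows "y \<in> Rge"
proof -
  obtain i where i: "l \<le> i" "i < n" "w \<in> A i" using assms(2) by (rule UE)
  obtain j where j: "j < n" "y \<in> A j" using assms(1) by (rule RE)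
  have "i \<le> j" using st.idx_le[OF i(2) j(1) i(3) j(2) assms(3)] .
  then show ?thesis using i j by (intro inU[of j]) auto
qed

lemma Rle_down: assumes "y \<in> R" "w \<in> Rle" "le y w" shows "y \<in> Rle"
proof -
  obtain i where i: "i < Suc l" "w \<in> A i" using assms(2) by (rule UE) auto
  obtain j where j: "j < n" "y \<in> A j" using assms(1) by (rule RE)
  have "j \<le> i" using st.idx_le[OF j(1) _ j(2) i(2) assms(3)] i ln by simp
  then show ?thesis using i j by (intro inU[of j]) auto
qed

lemma R_split1: "y \<in> R \<Longrightarrow> y \<in> Rlt \<or> y \<in> Rge"
  by (erule RE) (metis atLeastLessThan_iff inU le0 not_le)
lemma R_split2: "y \<in> R \<Longrightarrow> y \<in> Rle \<or> y \<in> Rgt"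
  by (erule RE) (metis atLeastLessThan_iff inU le0 not_le Suc_leI)

lemma lo_hi1: assumes "x \<in> Rlt" "y \<in> Rge" shows "\<not> le y x"
proof
  assume yx: "le y x"
  obtain i where i: "i < l" "x \<in> A i" using assms(1) by (rule UE) auto
  obtain j where j: "l \<le> j" "j < n" "y \<in> A j" using assms(2) by (rule UE)
  have "j \<le> i" using st.idx_le[OF j(2) _ j(3) i(2) yx] i ln by simp
  then show False using i j by simp
qed

lemma lo_hi2: assumes "x \<in> Rle" "y \<in> Rgt" shows "\<not> le y x"
proof
  assume yx: "le y x"
  obtain i where i: "i < Suc l" "x \<in> A i" using assms(1) by (rule UE) auto
  obtain j where j: "Suc l \<le> j" "j < n" "y \<in> A j" using assms(2) by (rule UE)
  have "j \<le> i" using st.idx_le[OF j(2) _ j(3) i(2) yx] i ln by simp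
  then show False using i j by simp
qed

lemma choose_up: assumes "w \<in> Rge" shows "\<exists>v\<in>A l. \<not> le w v"
proof -
  obtain j where j: "l \<le> j" "j < n" "w \<in> A j" using assms by (rule UE)
  show ?thesis
  proof (cases "j = l")
    case True
    then have "w = a \<or> w = b" using j Al by auto
    then show ?thesis
    proof
      assume "w = a" then show ?thesis using st.A_anti[OF ln] aA ab by metis
    next
      assume "w = b" then show ?thesis using st.A_anti[OF ln] aA ab by metis
    qed
  next
    case False
    have "\<not> le w a" using st.idx_le[OF j(2) ln j(3) aA(1)] j False by auto
    then show ?thesis using aA by blast
  qed
qed

lemma choose_down: assumes "w \<in> Rle" shows "\<exists>v\<in>A l. \<not> le v w"
proof -
  obtain j where j: "j < Suc l" "w \<in> A j" using assms by (rule UE) auto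
  show ?thesis
  proof (cases "j = l")
    case True
    then have "w = a \<or> w = b" using j Al by auto
    then show ?thesis
    proof
      assume "w = a" then show ?thesis using st.A_anti[OF ln] aA ab by metis
    next
      assume "w = b" then show ?thesis using st.A_anti[OF ln] aA ab by metis
    qed
  next
    case False
    have "\<not> le a w" using st.idx_le[OF ln _ aA(1) j(2)] j False ln by auto
    then show ?thesis using aA by blast
  qed
qed

lemma Rlt_level: assumes "x \<in> Rlt" "x \<in> level X le i" shows "i < k"
proof -
  obtain j where j: "j < l" "x \<in> A j" using assms(1) by (rule UE) auto
  have "lt le x a" using st.slt[OF _ ln j(1) j(2) aA(1)] j ln by simp
  then show ?thesis using sec.L_lt[OF assms(2) aL(1)] by simp
qed

lemma Rgt_level: assumes "x \<in> Rgt" "x \<in> level X le i" shows "k < i"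
proof -
  obtain j where j: "Suc l \<le> j" "j < n" "x \<in> A j" using assms(1) by (rule UE)
  have "lt le a x" using st.slt[OF ln j(2) _ aA(1) j(3)] j by simp
  then show ?thesis using sec.L_lt[OF aL(1) assms(2)] by simp
qed

lemma Al_level: "x \<in> A l \<Longrightarrow> x \<in> level X le k" using Al aL by auto

lemma levelsI: "x \<in> level X le i \<Longrightarrow> p \<le> i \<Longrightarrow> i \<le> q \<Longrightarrow> x \<in> levels X le p q"
  unfolding levels_def by auto
lemma levelsE: "x \<in> levels X le p q \<Longrightarrow> (\<And>i. p \<le> i \<Longrightarrow> i \<le> q \<Longrightarrow> x \<in> level X le i \<Longrightarrow> P) \<Longrightarrow> P"
  unfolding levels_def by auto
lemma levelsX: "levels X le p q \<subseteq> X" using sec.L_sub unfolding levels_def by blast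

lemma RlevX: "x \<in> R \<Longrightarrow> \<exists>i\<le>h. x \<in> level X le i" using RX sec.L_cover by blast

lemma Rlt_low: "Rlt \<subseteq> levels X le 0 (k - 1)"
proof
  fix x assume x: "x \<in> Rlt"
  have "x \<in> R" using URm[OF x] ln by simp
  then obtain i where i: "i \<le> h" "x \<in> level X le i" using RlevX by blast
  then show "x \<in> levels X le 0 (k - 1)" using Rlt_level[OF x i(2)] by (intro levelsI) auto
qed

lemma Rge_up_lev: "Rge \<subseteq> levels X le k h"
proof
  fix x assume x: "x \<in> Rge"
  have "x \<in> R" using URm[OF x] by simp
  then obtain i where i: "i \<le> h" "x \<in> level X le i" using RlevX by blast
  obtain j where j: "l \<le> j" "j < n" "x \<in> A j" using x by (rule UE)
  have "k \<le> i"
  proof (cases "j = l")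
    case True then show ?thesis using Al_level j i sec.L_disj by blast
  next
    case False then have "x \<in> Rgt" using j by (intro inU[of j]) auto
    then show ?thesis using Rgt_level i by fastforce
  qed
  then show "x \<in> levels X le k h" using i by (intro levelsI)
qed

lemma Rle_low: "Rle \<subseteq> levels X le 0 k"
proof
  fix x assume x: "x \<in> Rle"
  have "x \<in> R" using URm[OF x] ln by simp
  then obtain i where i: "i \<le> h" "x \<in> level X le i" using RlevX by blast
  obtain j where j: "j < Suc l" "x \<in> A j" using x by (rule UE) auto
  have "i \<le> k"
  proof (cases "j = l")
    case True then show ?thesis using Al_level j i sec.L_disj by blast
  next
    case False then have "x \<in> Rlt" using j by (intro inU[of j]) auto
    then show ?thesis using Rlt_level i by fastforce
  qed
  then show "x \<in> levels X le 0 k" using i by (intro levelsI) auto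
qed

lemma Rgt_up: "Rgt \<subseteq> levels X le (Suc k) h"
proof
  fix x assume x: "x \<in> Rgt"
  have "x \<in> R" using URm[OF x] by simp
  then obtain i where i: "i \<le> h" "x \<in> level X le i" using RlevX by blast
  then show "x \<in> levels X le (Suc k) h" using Rgt_level[OF x i(2)] by (intro levelsI) auto
qed

end



context mainl begin

lemma hd: "height X le = h" using sec.hdef by simp

lemma UP: assumes l1: "1 \<le> l" and hc: "r z \<in> Rge \<or> k = h"
  shows "\<exists>U s S t T. up_split X le (max (k - 1) 0) U s S t T \<and>
            set_less le (level S le (height S le)) (level T le 0) \<and>
            (\<forall>u\<in>U. \<exists>v\<in>level T le 0.
               \<forall>p\<in>levels X le (max (k - 1) 0 + 1) (height X le). t p = v \<longrightarrow> \<not> lt le u p)"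
proof -
  obtain x0 where x0: "x0 \<in> A (l - 1)" using st.A_ne ln by (meson less_imp_diff_less)
  have x0R: "x0 \<in> Rlt" using x0 l1 by (intro inU[of "l-1"]) auto
  have "x0 \<in> R" using URm[OF x0R] ln by simp
  then obtain i0 where i0: "x0 \<in> level X le i0" using RlevX by blast
  have k1: "1 \<le> k" using Rlt_level[OF x0R i0] by simp
  have mx: "max (k - 1) 0 = k - 1" "k - 1 + 1 = k" using k1 by auto
  define low where "low = levels X le 0 (k - 1)"
  define up where "up = levels X le k h"
  define t where "t x = (if r x \<in> Rge then r x else a)" for x
  define U0 where "U0 = {x \<in> low. r x \<in> Rge}"
  have upX: "up \<subseteq> X" and lowX: "low \<subseteq> X" unfolding up_def low_def using levelsX by auto
  have aR: "a \<in> R" "b \<in> R" using URm aRge by auto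
  have zk: "r z \<notin> Rge \<Longrightarrow> k = h" using hc by blast
  have good: "r x \<in> Rge" if x: "x \<in> up" "x \<noteq> z \<or> r z \<in> Rge" for x
  proof -
    obtain i where i: "k \<le> i" "i \<le> h" "x \<in> level X le i" using x(1) unfolding up_def by (rule levelsE)
    show ?thesis
    proof (cases "i = k")
      case True
      then have "x = a \<or> x = b \<or> x = z" using Lk i by auto
      then show ?thesis using x(2) rfix[OF aR(1)] rfix[OF aR(2)] aRge by auto
    next
      case False
      then have kh': "k < h" using i by simp
      then have rz: "r z \<in> Rge" using zk by auto
      obtain y where y: "y \<in> level X le k" "lt le y x"
      proof (cases "i = Suc k")
        case True then show ?thesis using sec.G1 i that by blast
      next
        case False
        then have "k + 2 \<le> i" using i \<open>i \<noteq> k\<close> by simp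
        then have "lt le a x" using sec.hor[of k i] aL i unfolding set_less_def by blast
        then show ?thesis using that aL by blast
      qed
      have "y = a \<or> y = b \<or> y = z" using Lk y by auto
      then have ry: "r y \<in> Rge" using rz rfix[OF aR(1)] rfix[OF aR(2)] aRge by auto
      have "le (r y) (r x)" using rmono y sec.L_sub i unfolding lt_def by blast
      moreover have "r x \<in> R" using rX x upX by blast
      ultimately show ?thesis using Rge_up ry by blast
    qed
  qed
  have t_in: "t x \<in> Rge" for x unfolding t_def using aRge by auto
  have RgeX: "Rge \<subseteq> up" using Rge_up_lev unfolding up_def .
  have t_eq: "t x = r x" if "x \<in> up" "x \<noteq> z \<or> r z \<in> Rge" for x using good[OF that] unfolding t_def by simp
  have ret_t: "retraction_on up le t"
    unfolding retraction_on_def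
  proof (intro conjI ballI impI)
    fix x assume "x \<in> up" then show "t x \<in> up" using t_in RgeX by blast
  next
    fix x assume "x \<in> up"
    have "t x \<in> R" using t_in URm by blast
    then show "t (t x) = t x" using rfix t_in unfolding t_def by simp
  next
    fix x y assume xy: "x \<in> up" "y \<in> up" "le x y"
    show "le (t x) (t y)"
    proof (cases "r z \<in> Rge \<or> (x \<noteq> z \<and> y \<noteq> z)")
      case True
      then show ?thesis using t_eq xy rmono upX by (metis subsetD)
    next
      case False
      then have "k = h" using zk by blast
      then have "x \<in> level X le h" "y \<in> level X le h" using xy unfolding up_def
        by (auto elim!: levelsE simp: le_antisym)
      then have "x = y" using sec.L_anti xy by blast
      moreover have "t x \<in> X" using t_in URm RX by blast
      ultimately show ?thesis using sec.refl by simp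
    qed
  qed
  have T_eq: "Rge = t ` up"
  proof
    show "t ` up \<subseteq> Rge" using t_in by blast
    show "Rge \<subseteq> t ` up"
    proof
      fix y assume y: "y \<in> Rge"
      then have "y \<in> R" using URm by blast
      then have "t y = y" using rfix y unfolding t_def by simp
      then show "y \<in> t ` up" using y RgeX by force
    qed
  qed
  have ret_s: "retraction_on (low - U0) le r"
    unfolding retraction_on_def
  proof (intro conjI ballI impI)
    fix x assume x: "x \<in> low - U0"
    then have "r x \<notin> Rge" unfolding U0_def by blast
    moreover have rxR: "r x \<in> R" using rX x lowX by blast
    ultimately have "r x \<in> Rlt" using R_split1 by blast
    then have "r x \<in> low" using Rlt_low unfolding low_def by blast
    moreover have "r (r x) = r x" using rfix rxR by blast
    ultimately show "r x \<in> low - U0" using \<open>r x \<notin> Rge\<close> unfolding U0_def by simp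
  next
    fix x assume x: "x \<in> low - U0"
    show "r (r x) = r x" using rfix rX x lowX by blast
  next
    fix x y assume "x \<in> low - U0" "y \<in> low - U0" "le x y"
    then show "le (r x) (r y)" using rmono lowX by blast
  qed
  have S_eq: "Rlt = r ` (low - U0)"
  proof
    show "r ` (low - U0) \<subseteq> Rlt"
    proof
      fix y assume "y \<in> r ` (low - U0)"
      then obtain x where x: "x \<in> low - U0" "y = r x" by blast
      then have "r x \<notin> Rge" unfolding U0_def by blast
      moreover have "r x \<in> R" using rX x lowX by blast
      ultimately show "y \<in> Rlt" using R_split1 x by blast
    qed
    show "Rlt \<subseteq> r ` (low - U0)"
    proof
      fix y assume y: "y \<in> Rlt"
      have yR: "y \<in> R" using URm[OF y] ln by simp
      have "y \<notin> Rge" using y lo_hi1 sec.refl RX yR by blast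
      then have "y \<in> low - U0" using y Rlt_low rfix yR unfolding low_def U0_def by auto
      moreover have "r y = y" using rfix yR by blast
      ultimately show "y \<in> r ` (low - U0)" by force
    qed
  qed
  have sp1: "split_piece Rlt le" using st.split_U l1 ln by simp
  have sp2: "split_piece Rge le" using st.split_U ln by simp
  have U0sub: "U0 \<subseteq> levels X le 0 (k - 1)" unfolding U0_def low_def by blast
  have us: "up_split X le (k - 1) U0 r Rlt t Rge"
    unfolding up_split_def Let_def hd mx(2)
  proof (intro conjI)
    show "k - 1 \<le> h - 1" using kh by simp
  qed (use U0sub ret_s ret_t S_eq T_eq sp1 sp2 in \<open>simp_all add: up_def low_def\<close>)
  have hS: "height Rlt le = l - 1" using st.height_U l1 ln by simp
  have lS: "level Rlt le (l - 1) = A (l - 1)" using st.level_U[of l 0 "l - 1"] l1 ln by simp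
  have lT: "level Rge le 0 = A l" using st.level_U[of n l 0] ln by simp
  have sl: "set_less le (A (l - 1)) (A l)" using st.sl l1 ln by simp
  have ucond: "\<exists>v\<in>level Rge le 0. \<forall>p\<in>up. t p = v \<longrightarrow> \<not> lt le u p" if u: "u \<in> U0" for u
  proof -
    have ru: "r u \<in> Rge" and uX: "u \<in> X" using u lowX unfolding U0_def by auto
    obtain v where v: "v \<in> A l" "\<not> le (r u) v" using choose_up[OF ru] by blast
    have "\<forall>p\<in>up. t p = v \<longrightarrow> \<not> lt le u p"
    proof (intro ballI impI notI)
      fix p assume p: "p \<in> up" "t p = v" "lt le u p"
      have le1: "le (r u) (r p)" using rmono uX p upX unfolding lt_def by blast
      show False
      proof (cases "r p \<in> Rge")
        case True then show False using p le1 v unfolding t_def by simp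
      next
        case False
        then have "r p \<in> Rlt" using R_split1 rX p upX by blast
        then show False using lo_hi1 ru le1 by blast
      qed
    qed
    then show ?thesis using v lT by blast
  qed
  show ?thesis
    unfolding mx hd
    apply (rule exI[of _ U0], rule exI[of _ r], rule exI[of _ Rlt], rule exI[of _ t], rule exI[of _ Rge])
    using us hS lS lT sl ucond unfolding up_def by simp
qed

end



context mainl begin

lemma DOWN: assumes l1: "Suc l < n" and hc: "r z \<in> Rle \<or> k = 0"
  shows "\<exists>D s S t T. down_split X le (min (k + 1) (height X le)) D s S t T \<and>
            set_less le (level T le (height T le)) (level S le 0) \<and>
            (\<forall>d\<in>D. \<exists>v\<in>level T le (height T le).
               \<forall>p\<in>levels X le 0 (min (k + 1) (height X le) - 1). t p = v \<longrightarrow> \<not> lt le p d)"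
proof -
  obtain x0 where x0: "x0 \<in> A (Suc l)" using st.A_ne l1 by blast
  have x0R: "x0 \<in> Rgt" using x0 l1 by (intro inU[of "Suc l"]) auto
  have "x0 \<in> R" using URm[OF x0R] by simp
  then obtain i0 where i0: "i0 \<le> h" "x0 \<in> level X le i0" using RlevX by blast
  have k1: "k < h" using Rgt_level[OF x0R i0(2)] i0(1) by simp
  have mx: "min (k + 1) h = k + 1" "k + 1 - 1 = k" using k1 by auto
  define low where "low = levels X le 0 k"
  define up where "up = levels X le (k + 1) h"
  define t where "t x = (if r x \<in> Rle then r x else a)" for x
  define D0 where "D0 = {x \<in> up. r x \<in> Rle}"
  have upX: "up \<subseteq> X" and lowX: "low \<subseteq> X" unfolding up_def low_def using levelsX by auto
  have aR: "a \<in> R" "b \<in> R" using URm aRge by auto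
  have zk: "r z \<notin> Rle \<Longrightarrow> k = 0" using hc by blast
  have good: "r x \<in> Rle" if x: "x \<in> low" "x \<noteq> z \<or> r z \<in> Rle" for x
  proof -
    obtain i where i: "i \<le> k" "x \<in> level X le i" using x(1) unfolding low_def by (rule levelsE) auto
    show ?thesis
    proof (cases "i = k")
      case True
      then have "x = a \<or> x = b \<or> x = z" using Lk i by auto
      then show ?thesis using x(2) rfix[OF aR(1)] rfix[OF aR(2)] aRge by auto
    next
      case False
      then have kh': "0 < k" using i by simp
      then have rz: "r z \<in> Rle" using zk by auto
      obtain y where y: "y \<in> level X le k" "lt le x y"
      proof (cases "Suc i = k")
        case True
        have "i < h" using True k1 by simp
        then obtain y where "y \<in> level X le (Suc i)" "lt le x y" using sec.G1d[OF i(2)] by blast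
        then show ?thesis using True that by blast
      next
        case False
        then have "i + 2 \<le> k" using i \<open>i \<noteq> k\<close> by simp
        then have "lt le x a" using sec.hor[of i k] aL i unfolding set_less_def by blast
        then show ?thesis using that aL by blast
      qed
      have "y = a \<or> y = b \<or> y = z" using Lk y by auto
      then have ry: "r y \<in> Rle" using rz rfix[OF aR(1)] rfix[OF aR(2)] aRge by auto
      have "le (r x) (r y)" using rmono y sec.L_sub i unfolding lt_def by blast
      moreover have "r x \<in> R" using rX x lowX by blast
      ultimately show ?thesis using Rle_down ry by blast
    qed
  qed
  have t_in: "t x \<in> Rle" for x unfolding t_def using aRge by auto
  have RleX: "Rle \<subseteq> low" using Rle_low unfolding low_def .
  have t_eq: "t x = r x" if "x \<in> low" "x \<noteq> z \<or> r z \<in> Rle" for x using good[OF that] unfolding t_def by simp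
  have ret_t: "retraction_on low le t"
    unfolding retraction_on_def
  proof (intro conjI ballI impI)
    fix x assume "x \<in> low" then show "t x \<in> low" using t_in RleX by blast
  next
    fix x assume "x \<in> low"
    have "t x \<in> R" using URm[OF t_in[of x]] ln by simp
    then show "t (t x) = t x" using rfix t_in unfolding t_def by simp
  next
    fix x y assume xy: "x \<in> low" "y \<in> low" "le x y"
    show "le (t x) (t y)"
    proof (cases "r z \<in> Rle \<or> (x \<noteq> z \<and> y \<noteq> z)")
      case True
      then show ?thesis using t_eq xy rmono lowX by (metis subsetD)
    next
      case False
      then have "k = 0" using zk by blast
      have "x \<in> level X le 0" using xy(1) unfolding low_def by (rule levelsE) (use \<open>k = 0\<close> in simp)
      moreover have "y \<in> level X le 0" using xy(2) unfolding low_def by (rule levelsE) (use \<open>k = 0\<close> in simp)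
      ultimately have "x = y" using sec.L_anti xy by blast
      moreover have "t x \<in> X" using URm[OF t_in[of x]] RX ln by auto
      ultimately show ?thesis using sec.refl by simp
    qed
  qed
  have T_eq: "Rle = t ` low"
  proof
    show "t ` low \<subseteq> Rle" using t_in by blast
    show "Rle \<subseteq> t ` low"
    proof
      fix y assume y: "y \<in> Rle"
      then have "y \<in> R" using URm[OF y] ln by simp
      then have "t y = y" using rfix y unfolding t_def by simp
      then show "y \<in> t ` low" using y RleX by force
    qed
  qed
  have ret_s: "retraction_on (up - D0) le r"
    unfolding retraction_on_def
  proof (intro conjI ballI impI)
    fix x assume x: "x \<in> up - D0"
    then have "r x \<notin> Rle" unfolding D0_def by blast
    moreover have rxR: "r x \<in> R" using rX x upX by blast
    ultimately have "r x \<in> Rgt" using R_split2 by blast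
    then have "r x \<in> up" using Rgt_up unfolding up_def by auto
    moreover have "r (r x) = r x" using rfix rxR by blast
    ultimately show "r x \<in> up - D0" using \<open>r x \<notin> Rle\<close> unfolding D0_def by simp
  next
    fix x assume x: "x \<in> up - D0"
    show "r (r x) = r x" using rfix rX x upX by blast
  next
    fix x y assume "x \<in> up - D0" "y \<in> up - D0" "le x y"
    then show "le (r x) (r y)" using rmono upX by blast
  qed
  have S_eq: "Rgt = r ` (up - D0)"
  proof
    show "r ` (up - D0) \<subseteq> Rgt"
    proof
      fix y assume "y \<in> r ` (up - D0)"
      then obtain x where x: "x \<in> up - D0" "y = r x" by blast
      then have "r x \<notin> Rle" unfolding D0_def by blast
      moreover have "r x \<in> R" using rX x upX by blast
      ultimately show "y \<in> Rgt" using R_split2 x by blast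
    qed
    show "Rgt \<subseteq> r ` (up - D0)"
    proof
      fix y assume y: "y \<in> Rgt"
      have yR: "y \<in> R" using URm[OF y] by simp
      have "y \<notin> Rle" using y lo_hi2 sec.refl RX yR by blast
      then have "y \<in> up - D0" using y Rgt_up rfix yR unfolding up_def D0_def by auto
      moreover have "r y = y" using rfix yR by blast
      ultimately show "y \<in> r ` (up - D0)" by force
    qed
  qed
  have sp1: "split_piece Rgt le" using st.split_U l1 by simp
  have sp2: "split_piece Rle le" using st.split_U ln by simp
  have D0sub: "D0 \<subseteq> levels X le (k + 1) h" unfolding D0_def up_def by blast
  have ds: "down_split X le (k + 1) D0 r Rgt t Rle"
    unfolding down_split_def Let_def hd mx(2)
  proof (intro conjI)
    show "1 \<le> k + 1" by simp
    show "k + 1 \<le> h" using k1 by simp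
  qed (use D0sub ret_s ret_t S_eq T_eq sp1 sp2 in \<open>simp_all add: up_def low_def\<close>)
  have hT: "height Rle le = l" using st.height_U ln by simp
  have lT: "level Rle le l = A l" using st.level_U[of "Suc l" 0 l] ln by simp
  have lS: "level Rgt le 0 = A (Suc l)" using st.level_U[of n "Suc l" 0] l1 by simp
  have sl: "set_less le (A l) (A (Suc l))" using st.sl l1 ln by simp
  have dcond: "\<exists>v\<in>level Rle le (height Rle le). \<forall>p\<in>low. t p = v \<longrightarrow> \<not> lt le p d" if d: "d \<in> D0" for d
  proof -
    have rd: "r d \<in> Rle" and dX: "d \<in> X" using d upX unfolding D0_def by auto
    obtain v where v: "v \<in> A l" "\<not> le v (r d)" using choose_down[OF rd] by blast
    have "\<forall>p\<in>low. t p = v \<longrightarrow> \<not> lt le p d"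
    proof (intro ballI impI notI)
      fix p assume p: "p \<in> low" "t p = v" "lt le p d"
      have le1: "le (r p) (r d)" using rmono dX p lowX unfolding lt_def by blast
      show False
      proof (cases "r p \<in> Rle")
        case True then show False using p le1 v unfolding t_def by simp
      next
        case False
        then have "r p \<in> Rgt" using R_split2 rX p lowX by blast
        then show False using lo_hi2 rd le1 by blast
      qed
    qed
    then show ?thesis unfolding hT lT using v(1) by blast
  qed
  show ?thesis
    unfolding mx hd
    apply (rule exI[of _ D0], rule exI[of _ r], rule exI[of _ Rgt], rule exI[of _ t], rule exI[of _ Rle])
    using ds hT lS lT sl dcond unfolding low_def by simp
qed

end



context mainl begin

lemma bot_eq: assumes "l = 0" "y \<in> R" "w \<in> A l" "le y w" shows "y = w"
proof -
  obtain j where j: "j < n" "y \<in> A j" using assms(2) by (rule RE)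
  have "j \<le> l" using st.idx_le[OF j(1) ln j(2) assms(3) assms(4)] .
  then have "j = l" using assms(1) by simp
  then show ?thesis using st.A_anti[OF ln] j assms by blast
qed

lemma top_eq: assumes "Suc l = n" "y \<in> R" "w \<in> A l" "le w y" shows "y = w"
proof -
  obtain j where j: "j < n" "y \<in> A j" using assms(2) by (rule RE)
  have "l \<le> j" using st.idx_le[OF ln j(1) assms(3) j(2) assms(4)] .
  then have "j = l" using assms(1) j by simp
  then show ?thesis using st.A_anti[OF ln] j assms by blast
qed

lemma MAIN: "(\<exists>U s S t T. up_split X le (max (k - 1) 0) U s S t T \<and>
            set_less le (level S le (height S le)) (level T le 0) \<and>
            (\<forall>u\<in>U. \<exists>v\<in>level T le 0.
               \<forall>p\<in>levels X le (max (k - 1) 0 + 1) (height X le). t p = v \<longrightarrow> \<not> lt le u p))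
       \<or> (\<exists>D s S t T. down_split X le (min (k + 1) (height X le)) D s S t T \<and>
            set_less le (level T le (height T le)) (level S le 0) \<and>
            (\<forall>d\<in>D. \<exists>v\<in>level T le (height T le).
               \<forall>p\<in>levels X le 0 (min (k + 1) (height X le) - 1). t p = v \<longrightarrow> \<not> lt le p d))"
proof -
  have aR: "a \<in> R" "b \<in> R" using URm aRge by auto
  have ra: "r a = a" "r b = b" using rfix aR by auto
  have zX: "z \<in> X" using aL sec.L_sub by blast
  have rzR: "r z \<in> R" using rX zX by blast
  show ?thesis
  proof (cases "r z \<in> Rge")
    case rz: True
    show ?thesis
    proof (cases "1 \<le> l")
      case True then show ?thesis using UP rz by blast
    next
      case False
      then have l0: "l = 0" by simp
      have k0: "k = 0"
      proof (rule ccontr)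
        assume "k \<noteq> 0"
        then consider "2 \<le> k" | "k = 1" by arith
        then show False
        proof cases
          case 1
          have w: "c 0 0 \<in> level X le 0" using sec.level_eq[of 0] by simp
          have wX: "c 0 0 \<in> X" using w sec.L_sub by blast
          have "lt le (c 0 0) a" "lt le (c 0 0) b" using sec.hor[of 0 k] 1 w aL unfolding set_less_def by auto
          then have "le (r (c 0 0)) a" "le (r (c 0 0)) b" using rmono wX aX ra unfolding lt_def by metis+
          then have "r (c 0 0) = a" "r (c 0 0) = b" using bot_eq[OF l0 rX[OF wX]] aA by auto
          then show False using ab by simp
        next
          case 2
          have eqa: "r x = a" if "x \<in> level X le 0" "lt le x a" for x
          proof -
            have xX: "x \<in> X" using that sec.L_sub by blast
            have "le (r x) a" using rmono[OF xX aX(1)] that ra unfolding lt_def by simp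
            then show ?thesis using bot_eq[OF l0 rX[OF xX] aA(1)] by simp
          qed
          have eqb: "r x = b" if "x \<in> level X le 0" "lt le x b" for x
          proof -
            have xX: "x \<in> X" using that sec.L_sub by blast
            have "le (r x) b" using rmono[OF xX aX(2)] that ra unfolding lt_def by simp
            then show ?thesis using bot_eq[OF l0 rX[OF xX] aA(2)] by simp
          qed
          obtain x1 x2 where x: "x1 \<in> level X le 0" "x2 \<in> level X le 0" "x1 \<noteq> x2" "lt le x1 a" "lt le x2 a"
            using sec.N0[of a] aL 2 by auto
          obtain y1 y2 where y: "y1 \<in> level X le 0" "y2 \<in> level X le 0" "y1 \<noteq> y2" "lt le y1 b" "lt le y2 b"
            using sec.N0[of b] aL 2 by auto
          have "x1 = y1 \<or> x1 = y2 \<or> x2 = y1 \<or> x2 = y2" using sec.pigeon x y by blast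
          then show False using eqa[OF x(1) x(4)] eqa[OF x(2) x(5)] eqb[OF y(1) y(4)] eqb[OF y(2) y(5)] ab by auto
        qed
      qed
      have "Suc l < n" using l0 n2 by simp
      then show ?thesis using DOWN k0 by blast
    qed
  next
    case rz: False
    then have rzl: "r z \<in> Rlt" using R_split1 rzR by blast
    then have l1: "1 \<le> l" by (auto elim: UE)
    have rzle: "r z \<in> Rle"
    proof -
      obtain i where i: "i < l" "r z \<in> A i" using rzl by (rule UE) auto
      then show ?thesis by (intro inU[of i]) auto
    qed
    show ?thesis
    proof (cases "Suc l < n")
      case True then show ?thesis using DOWN rzle by blast
    next
      case False
      then have ln1: "Suc l = n" using ln by simp
      have kh2: "k = h"
      proof (rule ccontr)
        assume "k \<noteq> h"
        then consider "k + 2 \<le> h" | "k = h - 1" using kh by arith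
        then show False
        proof cases
          case 1
          have w: "c h 0 \<in> level X le h" using sec.level_eq[of h] by simp
          have wX: "c h 0 \<in> X" using w sec.L_sub by blast
          have "lt le a (c h 0)" "lt le b (c h 0)" using sec.hor[of k h] 1 w aL unfolding set_less_def by auto
          then have "le a (r (c h 0))" "le b (r (c h 0))" using rmono wX aX ra unfolding lt_def by metis+
          then have "r (c h 0) = a" "r (c h 0) = b" using top_eq[OF ln1 rX[OF wX]] aA by auto
          then show False using ab by simp
        next
          case 2
          have eqa: "r x = a" if "x \<in> level X le h" "lt le a x" for x
          proof -
            have xX: "x \<in> X" using that sec.L_sub by blast
            have "le a (r x)" using rmono[OF aX(1) xX] that ra unfolding lt_def by simp
            then show ?thesis using top_eq[OF ln1 rX[OF xX] aA(1)] by simp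
          qed
          have eqb: "r x = b" if "x \<in> level X le h" "lt le b x" for x
          proof -
            have xX: "x \<in> X" using that sec.L_sub by blast
            have "le b (r x)" using rmono[OF aX(2) xX] that ra unfolding lt_def by simp
            then show ?thesis using top_eq[OF ln1 rX[OF xX] aA(2)] by simp
          qed
          obtain x1 x2 where x: "x1 \<in> level X le h" "x2 \<in> level X le h" "x1 \<noteq> x2" "lt le a x1" "lt le a x2"
            using sec.Ntop[of a] aL 2 by auto
          obtain y1 y2 where y: "y1 \<in> level X le h" "y2 \<in> level X le h" "y1 \<noteq> y2" "lt le b y1" "lt le b y2"
            using sec.Ntop[of b] aL 2 by auto
          have "x1 = y1 \<or> x1 = y2 \<or> x2 = y1 \<or> x2 = y2" using sec.pigeon x y by blast
          then show False using eqa[OF x(1) x(4)] eqa[OF x(2) x(5)] eqb[OF y(1) y(4)] eqb[OF y(2) y(5)] ab by auto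
        qed
      qed
      then show ?thesis using UP l1 by blast
    qed
  qed
qed

end

theorem corollary6p4:
  fixes X :: "'a set" and le :: "'a \<Rightarrow> 'a \<Rightarrow> bool" and r :: "'a \<Rightarrow> 'a"
    and R :: "'a set" and k l :: nat
  assumes "N2 X le"
    and "retraction_on X le r" and "R = r ` X" and "crown_stack R le"
    and "l \<le> height R le" and "k \<le> height X le"
    and "level R le l \<subseteq> level X le k"
  shows "(\<exists>U s S t T. up_split X le (max (k - 1) 0) U s S t T \<and>
            set_less le (level S le (height S le)) (level T le 0) \<and>
            (\<forall>u\<in>U. \<exists>v\<in>level T le 0.
               \<forall>p\<in>levels X le (max (k - 1) 0 + 1) (height X le). t p = v \<longrightarrow> \<not> lt le u p))
       \<or> (\<exists>D s S t T. down_split X le (min (k + 1) (height X le)) D s S t T \<and>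
            set_less le (level T le (height T le)) (level S le 0) \<and>
            (\<forall>d\<in>D. \<exists>v\<in>level T le (height T le).
               \<forall>p\<in>levels X le 0 (min (k + 1) (height X le) - 1). t p = v \<longrightarrow> \<not> lt le p d))"
proof -
  have po: "partial_order_on' X le" and nic: "nice X le"
    and hor: "\<forall>k l. l \<ge> k + 2 \<longrightarrow> set_less le (level X le k) (level X le l)"
    and exc: "\<exists>c. section3 X le c"
    using assms(1) unfolding N2_def by blast+
  obtain c where sc: "section3 X le c" using exc by blast
  interpret sec: sec X le c "height X le"
    using po sc nic hor by unfold_locales auto
  obtain n :: nat and A where nA: "n \<ge> 2" "\<forall>i<n. two_antichain (A i) le" "R = (\<Union>i<n. A i)"
    "\<forall>i<n. \<forall>j<n. i < j \<longrightarrow> set_less le (A i) (A j)"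
    using assms(4) unfolding crown_stack_def by blast
  have RX: "R \<subseteq> X" using assms(2,3) unfolding retraction_on_def by blast
  interpret st: stk X le A n
  proof (unfold_locales)
    show "partial_order_on' X le" by (rule po)
    show "A i \<subseteq> X" if "i < n" for i using that nA(3) RX by blast
    show "two_antichain (A i) le" if "i < n" for i using that nA(2) by blast
    show "set_less le (A i) (A j)" if "i < n" "j < n" "i < j" for i j using that nA(4) by blast
  qed
  have RU: "R = st.U 0 n" using nA(3) unfolding st.U_def by (simp add: atLeast0LessThan)
  have "height R le = n - 1" using st.height_U[of 0 n] nA(1) RU by simp
  then have ln: "l < n" using assms(5) nA(1) by simp
  have "level R le l = A l" using st.level_U[of n 0 l] ln RU by simp
  then have sub: "A l \<subseteq> level X le k" using assms(7) by simp
  obtain a b where ab: "a \<noteq> b" "A l = {a,b}" using st.A_two[OF ln] by blast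
  have abL: "a \<in> level X le k" "b \<in> level X le k" using sub ab by auto
  obtain z where z: "z \<in> level X le k" "z \<noteq> a" "z \<noteq> b" "level X le k = {a,b,z}"
    using sec.L_three[OF abL ab(1)] by blast
  interpret m: mainl X le c "height X le" A n r R l k a b z
    by unfold_locales (use assms(2,3) nA ln ab z assms(6) in auto)
  show ?thesis by (rule m.MAIN)
qed



end
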